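(* Let $n\ge 5$ with $n\equiv 1\pmod 4$, fix $\delta_0>0$, and let $T(a,b)=(n-1)^{n-1}a^n+n^nb^{n-1}$. For positive integers $A,B$ and a squarefree integer $d$, let $R_0(d)$ be the number of pairs $(a,b)\in\mathbb Z^2$ with $A\le |a|\le 2A$, $B\le |b|\le 2B$, $\gcd((n-1)a,nb)=1$ and $T(a,b)=d$. Then there is a constant $C>0$ such that for all sufficiently large $A$ and all $B>A^{1+\delta_0}$, $$\sum_{d\ \text{squarefree}}R_0(d)^2\le C\,AB.$$ *)

theory Defs
  imports Complex_Main "HOL-Computational_Algebra.Squarefree"
begin

definition T_form :: "nat \<Rightarrow> int \<Rightarrow> int \<Rightarrow> int" where
  "T_form n a b = (int n - 1) ^ (n - 1) * a ^ n + int n ^ n * b ^ (n - 1)"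

definition R0 :: "nat \<Rightarrow> nat \<Rightarrow> nat \<Rightarrow> int \<Rightarrow> nat" where
  "R0 n A B d = card {(a :: int, b :: int).
      int A \<le> \<bar>a\<bar> \<and> \<bar>a\<bar> \<le> 2 * int A \<and>
      int B \<le> \<bar>b\<bar> \<and> \<bar>b\<bar> \<le> 2 * int B \<and>
      gcd ((int n - 1) * a) (int n * b) = 1 \<and> T_form n a b = d}"

end

theory Submission imports Defs begin

lemma div_card_step:
  fixes p r e :: nat
  assumes p: "prime p" and r: "r > 0" and nd: "\<not> p dvd r"
  shows "card {d. d dvd p^e * r} \<le> (e+1) * card {d. d dvd r}"
proof -
  have sub: "{d. d dvd p^e * r} \<subseteq> (\<lambda>(i,d). p^i * d) ` ({0..e} \<times> {d. d dvd r})"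
  proof
    fix d assume "d \<in> {d. d dvd p^e * r}"
    hence dd: "d dvd p^e * r" by simp
    have d0: "d \<noteq> 0" using dd r p by (metis dvd_0_left_iff mult_is_0 not_prime_0 power_eq_0_iff gr_implies_not0)
    obtain y where dy: "d = p ^ multiplicity p d * y" and ny: "\<not> p dvd y"
      proof (rule multiplicity_decompose'[OF d0, of p])
      show "\<not> p dvd 1" using p by (metis nat_dvd_1_iff_1 not_prime_1)
    qed
    define i where "i = multiplicity p d"
    have "p^i dvd p^e * r" using dd dy i_def by (metis dvd_mult_left)
    moreover have "coprime (p^i) r" using nd p by (simp add: prime_imp_coprime)
    ultimately have "p^i dvd p^e" by (metis coprime_dvd_mult_left_iff)
    hence ie: "i \<le> e" using p by (metis power_dvd_imp_le prime_gt_1_nat)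
    have "y dvd p^e * r" using dd dy by (metis dvd_mult_right)
    moreover have "coprime y (p^e)" using ny p by (metis coprime_commute coprime_power_left_iff prime_imp_coprime)
    ultimately have "y dvd r" by (metis coprime_dvd_mult_right_iff)
    thus "d \<in> (\<lambda>(i,d). p^i * d) ` ({0..e} \<times> {d. d dvd r})"
      using ie dy i_def by (auto intro!: image_eqI[of _ _ "(i,y)"])
  qed
  have fin: "finite ({0..e} \<times> {d. d dvd r})" using finite_divisors_nat[OF r] by simp
  have "card {d. d dvd p^e * r} \<le> card ((\<lambda>(i,d). p^i * d) ` ({0..e} \<times> {d. d dvd r}))"
    by (rule card_mono[OF finite_imageI[OF fin] sub])
  also have "\<dots> \<le> card ({0..e} \<times> {d. d dvd r})" by (rule card_image_le[OF fin])
  also have "\<dots> = (e+1) * card {d. d dvd r}" by (simp add: card_cartesian_product)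
  finally show ?thesis .
qed

lemma powr_pow_swap: "(x::real) \<ge> 0 \<Longrightarrow> (x ^ e) powr \<epsilon> = (x powr \<epsilon>)^e"
  by (smt (verit) power_eq_0_iff power_le_one power_less_one_iff
    powr_eq_0_iff powr_nonneg_iff powr_one_eq_one powr_powr_swap
    powr_realpow)

lemma div_bound_aux:
  fixes \<epsilon> K :: real and S0 :: "nat set" and N :: nat
  assumes ep: "\<epsilon> > 0" and K1: "K \<ge> 1" and S0p: "\<And>q. q \<in> S0 \<Longrightarrow> prime q"
   and hsmall: "\<And>p e. prime p \<Longrightarrow> p \<in> S0 \<Longrightarrow> real (e+1) \<le> K * (real p powr \<epsilon>)^e"
   and hbig: "\<And>p e. prime p \<Longrightarrow> p \<notin> S0 \<Longrightarrow> real (e+1) \<le> (real p powr \<epsilon>)^e"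
  shows "N > 0 \<Longrightarrow> real (card {d. d dvd N}) \<le> K ^ card {p\<in>S0. p dvd N} * real N powr \<epsilon>"
proof (induction N rule: less_induct)
  case (less N)
  show ?case
  proof (cases "N = 1")
    case True
    have "{d. d dvd (1::nat)} = {1}" by auto
    thus ?thesis using True K1 by (simp add: one_le_power)
  next
    case False
    then obtain p where p: "prime p" "p dvd N" using prime_factor_nat by blast
    have N0: "N \<noteq> 0" using less.prems by simp
    obtain r where Nr: "N = p ^ multiplicity p N * r" and nr: "\<not> p dvd r"
    proof (rule multiplicity_decompose'[OF N0, of p])
      show "\<not> p dvd 1" using p by (metis nat_dvd_1_iff_1 not_prime_1)
    qed
    define e where "e = multiplicity p N"
    have e1: "e \<ge> 1" using p N0 e_def by (simp add: Suc_le_eq prime_multiplicity_gt_zero_iff)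
    have r0: "r > 0" using Nr N0 by (cases r) auto
    have p1: "p > 1" using p prime_gt_1_nat by blast
    have "p^e \<ge> p" using e1 p1 by (metis less_imp_le_nat power_increasing power_one_right)
    hence "p^e > 1" using p1 by linarith
    hence rN: "r < N" using Nr e_def r0 by (metis mult_less_cancel2 nat_mult_1)
    have IH: "real (card {d. d dvd r}) \<le> K ^ card {p\<in>S0. p dvd r} * real r powr \<epsilon>"
      using less.IH[OF rN r0] .
    have step: "card {d. d dvd N} \<le> (e+1) * card {d. d dvd r}"
      using div_card_step[OF p(1) r0 nr, of e] Nr e_def by simp
    have Npow: "real N powr \<epsilon> = (real p powr \<epsilon>)^e * real r powr \<epsilon>"
      proof -
      have "real N = real p ^ e * real r" using Nr e_def by (metis of_nat_mult of_nat_power)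
      thus ?thesis by (simp add: powr_mult powr_pow_swap)
    qed
    have primes: "{q\<in>S0. q dvd N} = (if p \<in> S0 then insert p {q\<in>S0. q dvd r} else {q\<in>S0. q dvd r})"
    proof -
      have "q dvd N \<longleftrightarrow> q = p \<or> q dvd r" if q: "q \<in> S0" for q
      proof -
        have qp: "prime q" using S0p q .
        have "q dvd N \<longleftrightarrow> q dvd p^e \<or> q dvd r" using Nr e_def qp by (metis prime_dvd_mult_iff)
        also have "q dvd p^e \<longleftrightarrow> q = p" using qp p(1) e1
          by (metis One_nat_def dvd_power le_add_diff_inverse plus_1_eq_Suc prime_dvd_power_iff primes_dvd_imp_eq
                zero_less_Suc)
        finally show ?thesis .
      qed
      thus ?thesis by auto
    qed
    have fin: "finite {q\<in>S0. q dvd r}" using finite_divisors_nat[OF r0]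
      by (rule rev_finite_subset) auto
    have Kp: "K ^ card {p\<in>S0. p dvd r} \<ge> 0" using K1 by simp
    have rp: "real r powr \<epsilon> \<ge> 0" by simp
    have "real (card {d. d dvd N}) \<le> real (e+1) * real (card {d. d dvd r})"
      using step by (metis of_nat_le_iff of_nat_mult)
    also have "\<dots> \<le> real (e+1) * (K ^ card {p\<in>S0. p dvd r} * real r powr \<epsilon>)"
      using IH by (intro mult_left_mono) auto
    also have "\<dots> \<le> K ^ card {p\<in>S0. p dvd N} * real N powr \<epsilon>"
    proof (cases "p \<in> S0")
      case True
      have cN: "card {q\<in>S0. q dvd N} = Suc (card {q\<in>S0. q dvd r})"
        using True primes fin nr by simp
      have "real (e+1) * (K ^ card {p\<in>S0. p dvd r} * real r powr \<epsilon>)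
          \<le> (K * (real p powr \<epsilon>)^e) * (K ^ card {p\<in>S0. p dvd r} * real r powr \<epsilon>)"
        using hsmall[OF p(1) True, of e] Kp rp by (intro mult_right_mono) auto
      also have "\<dots> = K ^ card {p\<in>S0. p dvd N} * real N powr \<epsilon>"
        using cN Npow by (simp add: algebra_simps)
      finally show ?thesis .
    next
      case False
      have cN: "card {q\<in>S0. q dvd N} = card {q\<in>S0. q dvd r}"
        using False primes by simp
      have "real (e+1) * (K ^ card {p\<in>S0. p dvd r} * real r powr \<epsilon>)
          \<le> ((real p powr \<epsilon>)^e) * (K ^ card {p\<in>S0. p dvd r} * real r powr \<epsilon>)"
        using hbig[OF p(1) False, of e] Kp rp by (intro mult_right_mono) auto
      also have "\<dots> = K ^ card {p\<in>S0. p dvd N} * real N powr \<epsilon>"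
        using cN Npow by (simp add: algebra_simps)
      finally show ?thesis .
    qed
    finally show ?thesis .
  qed
qed

lemma divisor_bound:
  fixes \<epsilon> :: real assumes ep: "\<epsilon> > 0"
  shows "\<exists>C>0. \<forall>N::nat. N > 0 \<longrightarrow> real (card {d. d dvd N}) \<le> C * real N powr \<epsilon>"
proof -
  define x where "x = \<epsilon> * ln 2"
  have x0: "x > 0" using ep by (simp add: x_def)
  define K where "K = 1 + 1 / x"
  have K1: "K \<ge> 1" using x0 by (simp add: K_def)
  define S0 where "S0 = {p::nat. prime p \<and> real p powr \<epsilon> < 2}"
  have S0p: "\<And>q. q \<in> S0 \<Longrightarrow> prime q" by (simp add: S0_def)
  have S0fin: "finite S0"
  proof (rule finite_subset)
    show "S0 \<subseteq> {..nat \<lceil>2 powr (1/\<epsilon>)\<rceil>}"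
    proof
      fix p assume "p \<in> S0"
      hence lt: "real p powr \<epsilon> < 2" by (simp add: S0_def)
      have "real p = (real p powr \<epsilon>) powr (1/\<epsilon>)" using ep by (simp add: powr_powr)
      also have "\<dots> \<le> 2 powr (1/\<epsilon>)" using lt ep by (intro powr_mono2) auto
      finally have "real p \<le> 2 powr (1/\<epsilon>)" .
      hence "real p \<le> real (nat \<lceil>2 powr (1/\<epsilon>)\<rceil>)" by linarith
      thus "p \<in> {..nat \<lceil>2 powr (1/\<epsilon>)\<rceil>}" by simp
    qed
  qed simp
  have hsmall: "real (e+1) \<le> K * (real p powr \<epsilon>)^e" if p: "prime p" for p e
  proof -
    have p2: "real p \<ge> 2" using p prime_ge_2_nat by (metis of_nat_le_iff of_nat_numeral)
    have "1 + x \<le> exp x" by (rule exp_ge_add_one_self)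
    also have "exp x = 2 powr \<epsilon>" by (simp add: x_def powr_def)
    also have "\<dots> \<le> real p powr \<epsilon>" using p2 ep by (intro powr_mono2) auto
    finally have b: "1 + x \<le> real p powr \<epsilon>" .
    have "1 + real e * x \<le> (1 + x)^e" using x0 by (intro Bernoulli_inequality) auto
    also have "\<dots> \<le> (real p powr \<epsilon>)^e" using b x0 by (intro power_mono) auto
    finally have c: "1 + real e * x \<le> (real p powr \<epsilon>)^e" .
    have "real (e+1) \<le> K * (1 + real e * x)"
      using x0 by (simp add: K_def field_simps)
    also have "\<dots> \<le> K * (real p powr \<epsilon>)^e" using c K1 by (intro mult_left_mono) auto
    finally show ?thesis .
  qed
  have hbig: "real (e+1) \<le> (real p powr \<epsilon>)^e" if p: "prime p" "p \<notin> S0" for p e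
  proof -
    have b: "real p powr \<epsilon> \<ge> 2" using p by (simp add: S0_def)
    have "real (e+1) \<le> (1 + 1)^e" using Bernoulli_inequality[of "1::real" e] by simp
    also have "\<dots> \<le> (real p powr \<epsilon>)^e" using b by (intro power_mono) auto
    finally show ?thesis .
  qed
  define C where "C = K ^ card S0"
  have C0: "C > 0" using K1 by (simp add: C_def)
  have "real (card {d. d dvd N}) \<le> C * real N powr \<epsilon>" if N: "N > 0" for N :: nat
  proof -
    have "real (card {d. d dvd N}) \<le> K ^ card {p\<in>S0. p dvd N} * real N powr \<epsilon>"
      using div_bound_aux[OF ep K1 S0p hsmall hbig N] by blast
    also have "\<dots> \<le> C * real N powr \<epsilon>"
    proof (intro mult_right_mono)
      have "card {p\<in>S0. p dvd N} \<le> card S0" using S0fin by (intro card_mono) auto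
      thus "K ^ card {p\<in>S0. p dvd N} \<le> C" unfolding C_def using K1 by (intro power_increasing) auto
    qed simp
    finally show ?thesis .
  qed
  thus ?thesis using C0 by blast
qed

lemma int_divisor_bound:
  fixes \<epsilon> :: real assumes ep: "\<epsilon> > 0"
  shows "\<exists>C>0. \<forall>M::int. M \<noteq> 0 \<longrightarrow> real (card {k. k dvd M}) \<le> C * \<bar>real_of_int M\<bar> powr \<epsilon>"
proof -
  obtain C where C0: "C > 0" and hC: "\<And>N::nat. N > 0 \<Longrightarrow> real (card {d. d dvd N}) \<le> C * real N powr \<epsilon>"
    using divisor_bound[OF ep] by blast
  have "real (card {k. k dvd M}) \<le> (2*C) * \<bar>real_of_int M\<bar> powr \<epsilon>" if M: "M \<noteq> 0" for M :: int
  proof -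
    define D where "D = {d. d dvd nat \<bar>M\<bar>}"
    have N0: "nat \<bar>M\<bar> > 0" using M by simp
    have finD: "finite D" using finite_divisors_nat[OF N0] by (simp add: D_def)
    have sub: "{k. k dvd M} \<subseteq> int ` D \<union> (\<lambda>d. - int d) ` D"
    proof
      fix k assume "k \<in> {k. k dvd M}"
      hence kd: "k dvd M" by simp
      have "int (nat \<bar>k\<bar>) dvd int (nat \<bar>M\<bar>)" using kd by simp
      hence "nat \<bar>k\<bar> dvd nat \<bar>M\<bar>" using int_dvd_int_iff by blast
      hence "nat \<bar>k\<bar> \<in> D" by (simp add: D_def)
      moreover have "k = int (nat \<bar>k\<bar>) \<or> k = - int (nat \<bar>k\<bar>)" by auto
      ultimately show "k \<in> int ` D \<union> (\<lambda>d. - int d) ` D" by blast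
    qed
    have "card {k. k dvd M} \<le> card (int ` D \<union> (\<lambda>d. - int d) ` D)"
      using finD sub by (intro card_mono) auto
    also have "\<dots> \<le> card (int ` D) + card ((\<lambda>d. - int d) ` D)" by (rule card_Un_le)
    also have "\<dots> \<le> card D + card D" by (intro add_mono card_image_le finD)
    finally have "real (card {k. k dvd M}) \<le> 2 * real (card D)" by simp
    also have "\<dots> \<le> 2 * (C * real (nat \<bar>M\<bar>) powr \<epsilon>)" using hC[OF N0] by (simp add: D_def)
    also have "real (nat \<bar>M\<bar>) = \<bar>real_of_int M\<bar>" by simp
    finally show ?thesis by simp
  qed
  thus ?thesis using C0 by (intro exI[of _ "2*C"]) auto
qed

lemma odd_pow_inj: assumes "odd n" "(a::int)^n = b^n" shows "a = b"
proof -
  have n0: "n > 0" using assms(1) by (cases n) auto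
  have "\<bar>a\<bar>^n = \<bar>b\<bar>^n" using assms(2) by (simp add: power_abs[symmetric])
  hence ab: "\<bar>a\<bar> = \<bar>b\<bar>" using n0 by (simp add: power_eq_iff_eq_base)
  have sg: "sgn (x^n) = sgn x" for x :: int
    using assms(1) n0 by (cases rule: linorder_cases[of x 0]) (auto simp: power_sgn)
  have "sgn (a^n) = sgn a" "sgn (b^n) = sgn b" using sg by auto
  hence "sgn a = sgn b" using assms(2) by simp
  have "a = sgn a * \<bar>a\<bar>" "b = sgn b * \<bar>b\<bar>" by (simp_all add: sgn_mult_abs)
  thus ?thesis using ab \<open>sgn a = sgn b\<close> by simp
qed

lemma even_pow_eq: assumes "even m" "m > 0" "(a::int)^m = b^m" shows "b = a \<or> b = -a"
proof -
  have "\<bar>a\<bar>^m = \<bar>b\<bar>^m" using assms by (simp add: power_even_abs)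
  hence "\<bar>a\<bar> = \<bar>b\<bar>" using assms(2) by (simp add: power_eq_iff_eq_base)
  thus ?thesis by arith
qed

lemma diff_dvd_pow_diff: "(x::int) - y dvd x^k - y^k"
  by (simp add: power_diff_sumr2)

lemma sum_dvd_pow_diff: assumes "even m" shows "(x::int) + y dvd x^m - y^m"
proof -
  obtain k where m: "m = 2*k" using assms by blast
  have "x^2 - y^2 dvd (x^2)^k - (y^2)^k" by (rule diff_dvd_pow_diff)
  hence h1: "x^2 - y^2 dvd x^m - y^m" by (simp add: m power_mult)
  have h2: "x + y dvd x^2 - y^2" by (rule dvdI[of _ _ "x - y"]) (simp add: power2_eq_square algebra_simps)
  show ?thesis by (rule dvd_trans[OF h2 h1])
qed

lemma E_card:
  fixes c2 M :: int and m :: nat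
  assumes "even m" "M \<noteq> 0"
  shows "finite {(b,b'). c2 * (b^m - b'^m) = M} \<and> card {(b,b'). c2 * (b^m - b'^m) = M} \<le> card {k. k dvd M} * card {k. k dvd M}"
proof -
  let ?E = "{(b,b'). c2 * (b^m - b'^m) = M}"
  let ?D = "{k. k dvd M}"
  have finD: "finite ?D" using finite_divisors_int[OF assms(2)] .
  have i: "inj_on (\<lambda>(b,b'). (b - b', b + b')) ?E"
    and sb: "(\<lambda>(b,b'). (b - b', b + b')) ` ?E \<subseteq> ?D \<times> ?D"
  proof -
    show "inj_on (\<lambda>(b,b'). (b - b', b + b')) ?E"
    proof (rule inj_onI)
      fix x y assume "x \<in> ?E" "y \<in> ?E" and eq: "(\<lambda>(b,b'). (b - b', b + b')) x = (\<lambda>(b,b'). (b - b', b + b')) y"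
      obtain x1 x2 y1 y2 where xy: "x = (x1,x2)" "y = (y1,y2)" by (cases x, cases y) auto
      have "x1 - x2 = y1 - y2" "x1 + x2 = y1 + y2" using eq xy by auto
      hence "x1 = y1" "x2 = y2" by linarith+
      thus "x = y" using xy by simp
    qed
    show "(\<lambda>(b,b'). (b - b', b + b')) ` ?E \<subseteq> ?D \<times> ?D"
    proof
      fix z assume "z \<in> (\<lambda>(b,b'). (b - b', b + b')) ` ?E"
      then obtain b b' where z: "z = (b - b', b + b')" and h: "c2 * (b^m - b'^m) = M" by auto
      have "b^m - b'^m dvd M" using h by (metis dvd_triv_right)
      hence "b - b' dvd M" "b + b' dvd M"
        using dvd_trans[OF diff_dvd_pow_diff] dvd_trans[OF sum_dvd_pow_diff[OF assms(1)]] by blast+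
      thus "z \<in> ?D \<times> ?D" using z by simp
    qed
  qed
  have fDD: "finite (?D \<times> ?D)" using finD by simp
  have "card ?E \<le> card (?D \<times> ?D)" by (rule card_inj_on_le[OF i sb fDD])
  moreover have "finite ?E" using finite_imageD[OF finite_subset[OF sb fDD] i] .
  ultimately show ?thesis by (simp add: card_cartesian_product)
qed


lemma pow_diff_bound:
  fixes c x y :: int and A :: int
  assumes "c > 0" "\<bar>x\<bar> \<le> 2*A" "\<bar>y\<bar> \<le> 2*A"
  shows "\<bar>c * (y^n - x^n)\<bar> \<le> c * 2 * (2*A)^n"
proof -
  have "\<bar>y^n - x^n\<bar> \<le> \<bar>y\<bar>^n + \<bar>x\<bar>^n" by (simp add: power_abs[symmetric] abs_triangle_ineq4)
  also have "\<dots> \<le> (2*A)^n + (2*A)^n" using assms by (intro add_mono power_mono) auto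
  finally have "\<bar>y^n - x^n\<bar> \<le> 2 * (2*A)^n" by linarith
  hence "c * \<bar>y^n - x^n\<bar> \<le> c * (2 * (2*A)^n)" using assms(1) by (intro mult_left_mono) auto
  thus ?thesis using assms(1) by (simp add: abs_mult)
qed

lemma sumsq_le:
  assumes fin: "finite P" and D: "D \<subseteq> f ` P"
  shows "(\<Sum>d\<in>D. (card {x\<in>P. f x = d})^2) \<le> card {(x,y). x\<in>P \<and> y\<in>P \<and> f x = f y}"
proof -
  have "(\<Sum>d\<in>D. (card {x\<in>P. f x = d})^2) \<le> (\<Sum>d\<in>f ` P. (card {x\<in>P. f x = d})^2)"
    using fin D by (intro sum_mono2) auto
  also have "\<dots> = (\<Sum>x\<in>P. card {y\<in>P. f y = f x})"
  proof -
    have "(\<Sum>x\<in>P. card {y\<in>P. f y = f x}) = (\<Sum>d\<in>f ` P. \<Sum>x\<in>{x. x\<in>P \<and> f x = d}. card {y\<in>P. f y = f x})"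
      by (rule sum.image_gen[OF fin])
    also have "\<dots> = (\<Sum>d\<in>f ` P. (card {x\<in>P. f x = d})^2)"
    proof (rule sum.cong[OF refl])
      fix d assume "d \<in> f ` P"
      have "(\<Sum>x\<in>{x. x\<in>P \<and> f x = d}. card {y\<in>P. f y = f x}) = (\<Sum>x\<in>{x. x\<in>P \<and> f x = d}. card {y\<in>P. f y = d})"
        by (rule sum.cong) auto
      also have "\<dots> = (card {x\<in>P. f x = d})^2" by (simp add: power2_eq_square)
      finally show "(\<Sum>x\<in>{x. x\<in>P \<and> f x = d}. card {y\<in>P. f y = f x}) = (card {x\<in>P. f x = d})^2" .
    qed
    finally show ?thesis by simp
  qed
  also have "\<dots> = card (Sigma P (\<lambda>x. {y\<in>P. f y = f x}))"
    using fin by (subst card_SigmaI) auto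
  also have "Sigma P (\<lambda>x. {y\<in>P. f y = f x}) = {(x,y). x\<in>P \<and> y\<in>P \<and> f x = f y}" by auto
  finally show ?thesis .
qed

theorem lemma5:
  fixes n :: nat and \<delta>0 :: real
  assumes "n \<ge> 5" and "n mod 4 = 1" and "\<delta>0 > 0"
  shows "\<exists>C > 0. \<exists>A0. \<forall>A B :: nat. A \<ge> A0 \<longrightarrow> A > 0 \<longrightarrow> B > 0 \<longrightarrow>
           real B > real A powr (1 + \<delta>0) \<longrightarrow>
           real (\<Sum>d\<in>{d :: int. squarefree d \<and> R0 n A B d \<noteq> 0}. (R0 n A B d)^2)
             \<le> C * real A * real B"
proof -
  have oddn: "odd n" using assms(2) by presburger
  define m where "m = n - 1"
  have evm: "even m" using oddn assms(1) by (simp add: m_def)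
  have m0: "m > 0" using assms(1) by (simp add: m_def)
  define c1 :: int where "c1 = (int n - 1)^(n-1)"
  have c1: "c1 > 0" using assms(1) by (simp add: c1_def)
  define c2 :: int where "c2 = int n ^ n"
  have c2: "c2 \<noteq> 0" using assms(1) by (simp add: c2_def)
  have Tdef: "T_form n a b = c1 * a^n + c2 * b^m" for a b
    by (simp add: T_form_def c1_def c2_def m_def)
  define \<epsilon> where "\<epsilon> = \<delta>0 / (2 * real n)"
  have ep: "\<epsilon> > 0" using assms by (simp add: \<epsilon>_def)
  have ep2: "2 * real n * \<epsilon> = \<delta>0" using assms(1) by (simp add: \<epsilon>_def)
  obtain C0 where C00: "C0 > 0" and hC: "\<And>M::int. M \<noteq> 0 \<Longrightarrow> real (card {k. k dvd M}) \<le> C0 * \<bar>real_of_int M\<bar> powr \<epsilon>"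
    using int_divisor_bound[OF ep] by blast
  define K0 :: real where "K0 = real_of_int c1 * 2 * 2^n"
  have K00: "K0 > 0" using c1 by (simp add: K0_def)
  define Bd :: real where "Bd = (C0 * K0 powr \<epsilon>)^2"
  have Bd0: "Bd \<ge> 0" by (simp add: Bd_def)
  define Cf where "Cf = 50 + 25 * Bd"
  have Cf0: "Cf > 0" using Bd0 by (simp add: Cf_def)
  have main: "real (\<Sum>d\<in>{d :: int. squarefree d \<and> R0 n A B d \<noteq> 0}. (R0 n A B d)^2) \<le> Cf * real A * real B"
    if A0: "A > 0" and B0: "B > 0" and AB: "real B > real A powr (1 + \<delta>0)" for A B :: nat
  proof -
    define P where "P = {(a :: int, b :: int).
      int A \<le> \<bar>a\<bar> \<and> \<bar>a\<bar> \<le> 2 * int A \<and>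
      int B \<le> \<bar>b\<bar> \<and> \<bar>b\<bar> \<le> 2 * int B \<and>
      gcd ((int n - 1) * a) (int n * b) = 1}"
    define f where "f = (\<lambda>(a,b). T_form n a b)"
    have R0eq: "R0 n A B d = card {x\<in>P. f x = d}" for d
      unfolding R0_def P_def f_def by (rule arg_cong[where f=card]) auto
    define IA where "IA = {-2 * int A..2 * int A}"
    define IB where "IB = {-2 * int B..2 * int B}"
    have PI: "P \<subseteq> IA \<times> IB" by (auto simp: P_def IA_def IB_def)
    have finI: "finite (IA \<times> IB)" by (simp add: IA_def IB_def)
    have finP: "finite P" using PI finI by (rule finite_subset)
    have cIA: "card IA = 4 * A + 1" by (simp add: IA_def)
    have cIB: "card IB = 4 * B + 1" by (simp add: IB_def)
    let ?D = "{d :: int. squarefree d \<and> R0 n A B d \<noteq> 0}"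
    let ?Q = "{(x,y). x\<in>P \<and> y\<in>P \<and> f x = f y}"
    have Dsub: "?D \<subseteq> f ` P"
    proof
      fix d assume "d \<in> ?D"
      hence "card {x\<in>P. f x = d} \<noteq> 0" by (simp add: R0eq)
      hence "{x\<in>P. f x = d} \<noteq> {}" by (metis card.empty)
      then obtain x where "x \<in> P" "f x = d" by blast
      thus "d \<in> f ` P" by blast
    qed
    have step1: "(\<Sum>d\<in>?D. (R0 n A B d)^2) \<le> card ?Q"
      using sumsq_le[OF finP Dsub] by (simp add: R0eq)
    define Q1 where "Q1 = (\<lambda>(x,s). (x, (fst x, s * snd x))) ` (P \<times> {1::int,-1})"
    define S where "S = {(a,a'). a \<in> IA \<and> a' \<in> IA \<and> a \<noteq> a'}"
    define E where "E = (\<lambda>(a::int,a'::int). {(b::int,b'::int). c2 * (b^m - b'^m) = c1 * (a'^n - a^n)})"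
    define Q2 where "Q2 = (\<Union>((\<lambda>(a,a'). (\<lambda>(b,b'). ((a,b),(a',b'))) ` E (a,a')) ` S))"
    have Qsub: "?Q \<subseteq> Q1 \<union> Q2"
    proof
      fix z assume zQ: "z \<in> ?Q"
      obtain a b a' b' where z: "z = ((a,b),(a',b'))" by (metis prod.collapse)
      have x: "(a,b) \<in> P" and y: "(a',b') \<in> P" and eq: "f (a,b) = f (a',b')" using zQ z by simp_all
      hence eq': "T_form n a b = T_form n a' b'" by (simp add: f_def)
      have eq2: "c2 * (b^m - b'^m) = c1 * (a'^n - a^n)" using eq' unfolding Tdef by (simp add: algebra_simps)
      show "z \<in> Q1 \<union> Q2"
      proof (cases "a = a'")
        case True
        hence "c2 * (b^m - b'^m) = 0" using eq2 by simp
        hence "b^m = b'^m" using c2 by simp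
        hence bb: "b' = b \<or> b' = -b" using even_pow_eq[OF evm m0] by blast
        obtain s :: int where s: "s \<in> {1,-1}" "b' = s * b"
        proof (cases "b' = b")
          case True
          show ?thesis by (rule that[of 1]) (use True in simp_all)
        next
          case False
          hence "b' = -b" using bb by blast
          show ?thesis by (rule that[of "-1"]) (use \<open>b' = -b\<close> in simp_all)
        qed
        have "z = (\<lambda>(x,s). (x, (fst x, s * snd x))) ((a,b),s)" using z True s by simp
        moreover have "((a,b),s) \<in> P \<times> {1::int,-1}" using x s by simp
        ultimately have "z \<in> Q1" unfolding Q1_def by (rule image_eqI)
        thus ?thesis by blast
      next
        case False
        have "a \<in> IA" "a' \<in> IA" using x y PI by blast+
        hence aS: "(a,a') \<in> S" using False by (simp add: S_def)
        have bE: "(b,b') \<in> E (a,a')" using eq2 by (simp add: E_def)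
        have "z = (\<lambda>(b,b'). ((a,b),(a',b'))) (b,b')" using z by simp
        hence "z \<in> (\<lambda>(b,b'). ((a,b),(a',b'))) ` E (a,a')" using bE by (rule image_eqI)
        hence "z \<in> (\<lambda>(a,a'). (\<lambda>(b,b'). ((a,b),(a',b'))) ` E (a,a')) (a,a')" by simp
        hence "z \<in> Q2" unfolding Q2_def using aS by (rule UN_I[rotated])
        thus ?thesis by blast
      qed
    qed
    have cQ1: "card Q1 \<le> 2 * card (IA \<times> IB)"
    proof -
      have "card Q1 \<le> card (P \<times> {1::int,-1})" unfolding Q1_def using finP by (intro card_image_le) auto
      also have "\<dots> = 2 * card P" by (simp add: card_cartesian_product)
      also have "\<dots> \<le> 2 * card (IA \<times> IB)" using card_mono[OF finI PI] by simp
      finally show ?thesis .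
    qed
    have finS: "finite S" by (rule finite_subset[of _ "IA \<times> IA"]) (auto simp: S_def IA_def)
    have cS: "card S \<le> card (IA \<times> IA)" by (rule card_mono) (auto simp: S_def IA_def)
    have termb: "real (card ((\<lambda>(b,b'). ((a,b),(a',b'))) ` E (a,a'))) \<le> Bd * real A powr \<delta>0"
      if aa: "(a,a') \<in> S" for a a'
    proof -
      define M where "M = c1 * (a'^n - a^n)"
      have ne: "a^n \<noteq> a'^n" using aa odd_pow_inj[OF oddn] by (auto simp: S_def)
      have M0: "M \<noteq> 0" using ne c1 by (simp add: M_def)
      have Ec: "finite (E (a,a')) \<and> card (E (a,a')) \<le> card {k. k dvd M} * card {k. k dvd M}"
        using E_card[OF evm M0, of c2] by (simp add: E_def M_def)
      have "card ((\<lambda>(b,b'). ((a,b),(a',b'))) ` E (a,a')) \<le> card (E (a,a'))"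
        using Ec by (intro card_image_le) simp
      also have "card (E (a,a')) \<le> card {k. k dvd M} * card {k. k dvd M}" using Ec by simp
      finally have c0: "real (card ((\<lambda>(b,b'). ((a,b),(a',b'))) ` E (a,a'))) \<le> real (card {k. k dvd M} * card {k. k dvd M})"
        by (simp only: of_nat_le_iff)
      have c: "real (card ((\<lambda>(b,b'). ((a,b),(a',b'))) ` E (a,a'))) \<le> real (card {k. k dvd M}) ^ 2"
        using c0 by (simp add: power2_eq_square)
      have Mb: "\<bar>M\<bar> \<le> c1 * 2 * (2 * int A)^n" unfolding M_def
        using aa c1 by (intro pow_diff_bound) (auto simp: S_def IA_def)
      have Mr: "\<bar>real_of_int M\<bar> \<le> K0 * real A ^ n"
      proof -
        have "\<bar>real_of_int M\<bar> \<le> real_of_int (c1 * 2 * (2 * int A)^n)" using Mb by linarith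
        also have "\<dots> = K0 * real A ^ n" by (simp add: K0_def power_mult_distrib)
        finally show ?thesis .
      qed
      have "real (card {k. k dvd M}) \<le> C0 * \<bar>real_of_int M\<bar> powr \<epsilon>" using hC[OF M0] .
      also have "\<dots> \<le> C0 * (K0 * real A ^ n) powr \<epsilon>" using Mr C00 ep by (intro mult_left_mono powr_mono2) auto
      also have "\<dots> = C0 * K0 powr \<epsilon> * (real A powr \<epsilon>)^n" using K00 by (simp add: powr_mult powr_pow_swap)
      finally have d: "real (card {k. k dvd M}) \<le> C0 * K0 powr \<epsilon> * (real A powr \<epsilon>)^n" .
      have "real (card {k. k dvd M}) ^ 2 \<le> (C0 * K0 powr \<epsilon> * (real A powr \<epsilon>)^n)^2"
        using d by (intro power_mono) auto
      also have "\<dots> = Bd * ((real A powr \<epsilon>)^n)^2" by (simp add: Bd_def power_mult_distrib)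
      also have "((real A powr \<epsilon>)^n)^2 = real A powr (2 * real n * \<epsilon>)"
      proof -
        have Ap: "real A powr \<epsilon> > 0" using A0 by simp
        have "(real A powr \<epsilon>)^n = (real A powr \<epsilon>) powr (real n)" by (rule powr_realpow[OF Ap, symmetric])
        also have "\<dots> = real A powr (\<epsilon> * real n)" by (simp add: powr_powr)
        finally have h: "(real A powr \<epsilon>)^n = real A powr (\<epsilon> * real n)" .
        have "(real A powr (\<epsilon> * real n))^2 = real A powr (\<epsilon> * real n) * real A powr (\<epsilon> * real n)"
          by (simp add: power2_eq_square)
        also have "\<dots> = real A powr (2 * real n * \<epsilon>)" by (simp add: powr_add[symmetric] algebra_simps)
        finally show ?thesis using h by simp
      qed
      finally have "real (card {k. k dvd M}) ^ 2 \<le> Bd * real A powr \<delta>0" using ep2 by simp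
      thus ?thesis using c by linarith
    qed
    have cQ2: "real (card Q2) \<le> real (card (IA \<times> IA)) * (Bd * real A powr \<delta>0)"
    proof -
      have "card Q2 \<le> (\<Sum>i\<in>S. card ((\<lambda>(a,a'). (\<lambda>(b,b'). ((a,b),(a',b'))) ` E (a,a')) i))"
        unfolding Q2_def by (rule card_UN_le[OF finS])
      hence "real (card Q2) \<le> real (\<Sum>i\<in>S. card ((\<lambda>(a,a'). (\<lambda>(b,b'). ((a,b),(a',b'))) ` E (a,a')) i))"
        by (simp only: of_nat_le_iff)
      also have "\<dots> = (\<Sum>i\<in>S. real (card ((\<lambda>(a,a'). (\<lambda>(b,b'). ((a,b),(a',b'))) ` E (a,a')) i)))"
        by (rule of_nat_sum)
      also have "\<dots> \<le> real (card S) * (Bd * real A powr \<delta>0)"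
      proof (rule sum_bounded_above)
        fix i assume "i \<in> S"
        then obtain a a' where i: "i = (a,a')" "(a,a') \<in> S" by (metis prod.collapse)
        show "real (card ((\<lambda>(a,a'). (\<lambda>(b,b'). ((a,b),(a',b'))) ` E (a,a')) i)) \<le> Bd * real A powr \<delta>0"
          using termb[OF i(2)] i(1) by simp
      qed
      also have "\<dots> \<le> real (card (IA \<times> IA)) * (Bd * real A powr \<delta>0)"
        using cS Bd0 by (intro mult_right_mono) auto
      finally show ?thesis .
    qed
    have Efin: "finite (E (a,a'))" if aa: "(a,a') \<in> S" for a a'
    proof -
      have ne: "a^n \<noteq> a'^n" using aa odd_pow_inj[OF oddn] by (auto simp: S_def)
      have M0: "c1 * (a'^n - a^n) \<noteq> 0" using ne c1 by simp
      show ?thesis using E_card[OF evm M0, of c2] by (simp add: E_def)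
    qed
    have finQ1: "finite Q1" unfolding Q1_def using finP by simp
    have finQ2: "finite Q2" unfolding Q2_def
    proof (rule finite_UN_I[OF finS])
      fix i assume "i \<in> S"
      then obtain a a' where i: "i = (a,a')" "(a,a') \<in> S" by (metis prod.collapse)
      show "finite ((\<lambda>(a,a'). (\<lambda>(b,b'). ((a,b),(a',b'))) ` E (a,a')) i)"
        using Efin[OF i(2)] i(1) by simp
    qed
    have finQ12: "finite (Q1 \<union> Q2)" using finQ1 finQ2 by simp
    have "real (card ?Q) \<le> real (card Q1) + real (card Q2)"
    proof -
      have "card ?Q \<le> card (Q1 \<union> Q2)" by (rule card_mono[OF finQ12 Qsub])
      also have "\<dots> \<le> card Q1 + card Q2" by (rule card_Un_le)
      finally show ?thesis by linarith
    qed
    also have "\<dots> \<le> 2 * ((4 * real A + 1) * (4 * real B + 1)) + (4 * real A + 1)^2 * (Bd * real A powr \<delta>0)"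
    proof -
      have e1: "real (card (IA \<times> IB)) = (4 * real A + 1) * (4 * real B + 1)"
        by (simp add: card_cartesian_product cIA cIB algebra_simps)
      have "real (card Q1) \<le> real (2 * card (IA \<times> IB))" using cQ1 by (simp only: of_nat_le_iff)
      hence "real (card Q1) \<le> 2 * ((4 * real A + 1) * (4 * real B + 1))" using e1 by simp
      have e2: "real (card (IA \<times> IA)) = (4 * real A + 1)^2"
        by (simp add: card_cartesian_product cIA algebra_simps power2_eq_square)
      have "real (card Q2) \<le> (4 * real A + 1)^2 * (Bd * real A powr \<delta>0)"
        using cQ2 by (simp only: e2)
      moreover note \<open>real (card Q1) \<le> 2 * ((4 * real A + 1) * (4 * real B + 1))\<close>
      ultimately show ?thesis by linarith
    qed
    also have "\<dots> \<le> Cf * real A * real B"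
    proof -
      have A1: "real A \<ge> 1" and B1: "real B \<ge> 1" using A0 B0 by auto
      have ab1: "real A * 1 \<le> real A * real B" using A1 B1 by (intro mult_left_mono) auto
      have ab2: "1 * real B \<le> real A * real B" using A1 B1 by (intro mult_right_mono) auto
      have aa1: "real A * 1 \<le> real A * real A" using A1 by (intro mult_left_mono) auto
      have e1: "(4 * real A + 1) * (4 * real B + 1) = 16 * (real A * real B) + 4 * real A + 4 * real B + 1"
        by (simp add: algebra_simps)
      have e2: "(4 * real A + 1)^2 = 16 * (real A * real A) + 8 * real A + 1"
        by (simp add: algebra_simps power2_eq_square)
      have h1: "(4 * real A + 1) * (4 * real B + 1) \<le> 25 * real A * real B"
        using e1 ab1 ab2 A1 by linarith
      have h2: "(4 * real A + 1)^2 \<le> 25 * real A * real A" using e2 aa1 A1 by linarith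
      have h3: "real A * real A powr \<delta>0 \<le> real B"
      proof -
        have "real A * real A powr \<delta>0 = real A powr (1 + \<delta>0)" using A0 by (simp add: powr_add)
        thus ?thesis using AB by simp
      qed
      have "(4 * real A + 1)^2 * (Bd * real A powr \<delta>0) \<le> (25 * real A * real A) * (Bd * real A powr \<delta>0)"
        using h2 Bd0 by (intro mult_right_mono) auto
      also have "\<dots> = 25 * Bd * real A * (real A * real A powr \<delta>0)" by (simp add: algebra_simps)
      also have "\<dots> \<le> 25 * Bd * real A * real B" using h3 Bd0 A1 by (intro mult_left_mono) auto
      finally have "(4 * real A + 1)^2 * (Bd * real A powr \<delta>0) \<le> 25 * Bd * real A * real B" .
      thus ?thesis using h1 by (simp add: Cf_def algebra_simps)
    qed
    finally have fin: "real (card ?Q) \<le> Cf * real A * real B" .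
    have "real (\<Sum>d\<in>?D. (R0 n A B d)^2) \<le> real (card ?Q)" using step1 by linarith
    thus ?thesis using fin by linarith
  qed
  show ?thesis using main Cf0 by blast
qed

end
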